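(* Let $K$ be a field, $n\ge2$, and consider $K^n$ as a left module over the matrix algebra $M_n(K)$ via matrix–vector multiplication. Let $N$ be a $K$-subspace of $K^n$. Then: (i) if $N=K^n$, then $\sigma_\vartheta(N)=\tau_\vartheta(N)=K^n$ for all $\vartheta$; (ii) if $N=0$, then $\sigma_\vartheta(N)=\tau_\vartheta(N)=K^n$ when $\vartheta$ = left, and $\sigma_\vartheta(N)=\tau_\vartheta(N)=0$ when $\vartheta$ is right, pre-two-sided or two-sided; (iii) if $N$ is nonzero and proper, then $\sigma_\vartheta(N)=\tau_\vartheta(N)=0$ for all $\vartheta$.
   Context: For an associative unital algebra $\mathcal A$ over a field $K$, the symbol $\vartheta$ ranges over "left", "right", "pre-two-sided", "two-sided". A subspace $J\subseteq\mathcal A$ is a left (resp. right; two-sided) Mathieu subspace of $\mathcal A$ if whenever $a\in\mathcal A$ satisfies $a^m\in J$ for all $m\ge1$, then for all $b,c\in\mathcal A$ there is $N_0$ with $ba^m\in J$ (resp. $a^mc\in J$; $ba^mc\in J$) for all $m\ge N_0$; pre-two-sided means both left and right. A $\vartheta$-ideal means a left/right/two-sided ideal accordingly, and a two-sided ideal for $\vartheta$ = pre-two-sided. For a left $\mathcal A$-module $\mathcal M$, $u\in\mathcal M$, $N\subseteq \mathcal M$, $(N:u)=\{a\in\mathcal A: au\in N\}$; for a subspace $N$, $\sigma_\vartheta(N)=\{u\in\mathcal M: (N:u)\text{ is a }\vartheta\text{-ideal of }\mathcal A\}$, $\tau_\vartheta(N)=\{u\in\mathcal M: (N:u)\text{ is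 a }\vartheta\text{-Mathieu subspace of }\mathcal A\}$. *)

theory Defs
  imports "HOL-Analysis.Analysis"
begin

text \<open>The algebra M_n(K) is rendered as the type 'a^'n^'n (with 'n a finite index type,
  n = CARD('n)), with product (**), identity mat 1; K^n is 'a^'n, acted on by (*v).\<close>

datatype theta = LeftT | RightT | PreTwoSided | TwoSided

definition mpow :: "'a::semiring_1^'n^'n \<Rightarrow> nat \<Rightarrow> 'a^'n^'n" where
  "mpow A m = ((\<lambda>B. A ** B) ^^ m) (mat 1)"

definition vec_subspace :: "('a::field^'n) set \<Rightarrow> bool" where
  "vec_subspace N \<longleftrightarrow> 0 \<in> N \<and> (\<forall>u\<in>N. \<forall>v\<in>N. u + v \<in> N) \<and> (\<forall>c. \<forall>u\<in>N. c *s u \<in> N)"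

definition mat_subspace :: "('a::field^'n^'n) set \<Rightarrow> bool" where
  "mat_subspace J \<longleftrightarrow> 0 \<in> J \<and> (\<forall>A\<in>J. \<forall>B\<in>J. A + B \<in> J)
     \<and> (\<forall>c. \<forall>A\<in>J. (\<chi> i j. c * A $ i $ j) \<in> J)"

definition left_mathieu :: "('a::field^'n^'n) set \<Rightarrow> bool" where
  "left_mathieu J \<longleftrightarrow> mat_subspace J \<and>
    (\<forall>a. (\<forall>m\<ge>1. mpow a m \<in> J) \<longrightarrow> (\<forall>b. \<exists>N0. \<forall>m\<ge>N0. b ** mpow a m \<in> J))"

definition right_mathieu :: "('a::field^'n^'n) set \<Rightarrow> bool" where
  "right_mathieu J \<longleftrightarrow> mat_subspace J \<and>
    (\<forall>a. (\<forall>m\<ge>1. mpow a m \<in> J) \<longrightarrow> (\<forall>c. \<exists>N0. \<forall>m\<ge>N0. mpow a m ** c \<in> J))"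

definition two_sided_mathieu :: "('a::field^'n^'n) set \<Rightarrow> bool" where
  "two_sided_mathieu J \<longleftrightarrow> mat_subspace J \<and>
    (\<forall>a. (\<forall>m\<ge>1. mpow a m \<in> J) \<longrightarrow> (\<forall>b c. \<exists>N0. \<forall>m\<ge>N0. b ** mpow a m ** c \<in> J))"

fun is_mathieu :: "theta \<Rightarrow> ('a::field^'n^'n) set \<Rightarrow> bool" where
  "is_mathieu LeftT J = left_mathieu J"
| "is_mathieu RightT J = right_mathieu J"
| "is_mathieu PreTwoSided J = (left_mathieu J \<and> right_mathieu J)"
| "is_mathieu TwoSided J = two_sided_mathieu J"

definition left_ideal :: "('a::field^'n^'n) set \<Rightarrow> bool" where
  "left_ideal J \<longleftrightarrow> mat_subspace J \<and> (\<forall>b. \<forall>A\<in>J. b ** A \<in> J)"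

definition right_ideal :: "('a::field^'n^'n) set \<Rightarrow> bool" where
  "right_ideal J \<longleftrightarrow> mat_subspace J \<and> (\<forall>c. \<forall>A\<in>J. A ** c \<in> J)"

fun is_ideal :: "theta \<Rightarrow> ('a::field^'n^'n) set \<Rightarrow> bool" where
  "is_ideal LeftT J = left_ideal J"
| "is_ideal RightT J = right_ideal J"
| "is_ideal PreTwoSided J = (left_ideal J \<and> right_ideal J)"
| "is_ideal TwoSided J = (left_ideal J \<and> right_ideal J)"

definition colon :: "('a::field^'n) set \<Rightarrow> 'a^'n \<Rightarrow> ('a^'n^'n) set" where
  "colon N u = {A. A *v u \<in> N}"

definition sigma_th :: "theta \<Rightarrow> ('a::field^'n) set \<Rightarrow> ('a^'n) set" where
  "sigma_th th N = {u. is_ideal th (colon N u)}"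

definition tau_th :: "theta \<Rightarrow> ('a::field^'n) set \<Rightarrow> ('a^'n) set" where
  "tau_th th N = {u. is_mathieu th (colon N u)}"

end

theory Submission
  imports Defs
begin

definition dp :: "'a::field^'n \<Rightarrow> 'a^'n \<Rightarrow> 'a" where
  "dp x y = (\<Sum>i\<in>UNIV. x$i * y$i)"

definition outer :: "'a::field^'n \<Rightarrow> 'a^'n \<Rightarrow> 'a^'n^'n" where
  "outer x y = (\<chi> i j. x$i * y$j)"

lemma outer_mv: "outer x y *v z = dp y z *s x"
  by (simp add: vec_eq_iff outer_def dp_def matrix_vector_mult_def sum_distrib_left
      sum_distrib_right mult.assoc mult.left_commute mult.commute)

lemma dp_add_right: "dp h (x + z) = dp h x + dp h z"
  by (simp add: dp_def distrib_left sum.distrib)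

lemma dp_add_left: "dp (x + z) h = dp x h + dp z h"
  by (simp add: dp_def distrib_right sum.distrib)

lemma dp_diff_left: "dp (x - z) h = dp x h - dp z h"
  by (simp add: dp_def left_diff_distrib sum_subtractf)

lemma dp_scale_right: "dp h (c *s x) = c * dp h x"
  by (simp add: dp_def sum_distrib_left mult.left_commute)

lemma dp_scale_left: "dp (c *s h) x = c * dp h x"
  by (simp add: dp_def sum_distrib_left mult.assoc)

lemma dp_axis_left: "dp (axis k c) x = c * x$k"
proof -
  have "dp (axis k c) x = (\<Sum>i\<in>UNIV. if i = k then c * x$i else 0)"
    unfolding dp_def axis_def by (intro sum.cong) auto
  then show ?thesis by simp
qed

lemma dp_axis_right: "dp x (axis k c) = x$k * c"
proof -
  have "dp x (axis k c) = (\<Sum>i\<in>UNIV. if i = k then x$i * c else 0)"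
    unfolding dp_def axis_def by (intro sum.cong) auto
  then show ?thesis by simp
qed

lemma mpow_Suc: "mpow a (Suc m) = a ** mpow a m"
  by (simp add: mpow_def)

lemma mpow_idem:
  assumes "\<And>x. a *v (a *v x) = a *v x" "m \<ge> 1"
  shows "mpow a m *v x = a *v x"
  using assms(2)
proof (induction m)
  case 0 then show ?case by simp
next
  case (Suc m)
  show ?case
  proof (cases "m = 0")
    case True then show ?thesis by (simp add: mpow_Suc mpow_def)
  next
    case False
    then have "mpow a m *v x = a *v x" using Suc by simp
    then show ?thesis by (simp add: mpow_Suc matrix_vector_mul_assoc[symmetric] assms(1))
  qed
qed

lemma outer_idem:
  assumes "dp h y = 1"
  shows "outer y h *v (outer y h *v x) = outer y h *v x"
  by (simp add: outer_mv dp_scale_right assms)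

lemma colon_subspace:
  assumes "vec_subspace N"
  shows "mat_subspace (colon N u)"
proof -
  have sc: "(\<chi> i j. c * A $ i $ j) *v u = c *s (A *v u)" for c and A :: "'a^'b^'b"
    by (simp add: vec_eq_iff matrix_vector_mult_def sum_distrib_left mult.assoc)
  show ?thesis using assms
    unfolding mat_subspace_def colon_def vec_subspace_def
    by (simp add: matrix_vector_mult_add_rdistrib sc)
qed


lemma exists_other:
  fixes k :: 'n
  assumes "CARD('n) \<ge> 2"
  shows "\<exists>j::'n. j \<noteq> k"
proof (rule ccontr)
  assume "\<not> ?thesis"
  then have "(UNIV::'n set) = {k}" by auto
  then have "CARD('n) = 1" by (metis card.empty card_insert_disjoint empty_iff finite.emptyI One_nat_def)
  then show False using assms by simp
qed

lemma nonzero_coord: "(u::'a::field^'n) \<noteq> 0 \<Longrightarrow> \<exists>k. u$k \<noteq> 0"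
  by (auto simp: vec_eq_iff)

lemma sub_scale:
  assumes "vec_subspace N" "c *s v \<in> N" "c \<noteq> 0"
  shows "v \<in> N"
proof -
  have "inverse c *s (c *s v) \<in> N" using assms unfolding vec_subspace_def by blast
  then show ?thesis using assms(3) by (simp add: vector_smult_assoc)
qed

lemma right_fail:
  fixes N :: "('a::field ^ 'n) set"
  assumes "CARD('n) \<ge> 2" "vec_subspace N" "N \<noteq> UNIV" "u \<noteq> 0"
  shows "\<not> right_mathieu (colon N u) \<and> \<not> two_sided_mathieu (colon N u)"
proof -
  obtain k where k: "u$k \<noteq> 0" using nonzero_coord[OF assms(4)] by blast
  obtain j where j: "j \<noteq> k" using exists_other[OF assms(1)] by blast
  define h where "h = axis j (u$k) - axis k (u$j)"
  have hu: "dp h u = 0" unfolding h_def by (simp add: dp_diff_left dp_axis_left mult.commute)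
  define z :: "'a^'n" where "z = axis j 1"
  have hz: "dp h z \<noteq> 0" unfolding h_def z_def using j k
    by (simp add: dp_diff_left dp_axis_left vec_lambda_beta axis_def[of j 1])
  obtain x where x: "x \<notin> N" using assms(3) by blast
  have "\<exists>y. y \<notin> N \<and> dp h y \<noteq> 0"
  proof (cases "dp h x \<noteq> 0")
    case True then show ?thesis using x by blast
  next
    case False
    show ?thesis
    proof (cases "z \<in> N")
      case True
      have "x + z \<notin> N"
      proof
        assume "x + z \<in> N"
        then have "(x + z) + ((-1) *s z) \<in> N" using True assms(2) unfolding vec_subspace_def by blast
        then show False using x by (simp add: vector_sneg_minus1[symmetric])
      qed
      moreover have "dp h (x + z) \<noteq> 0" using False hz by (simp add: dp_add_right)
      ultimately show ?thesis by blast
    next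
      case False then show ?thesis using hz by blast
    qed
  qed
  then obtain y0 where y0: "y0 \<notin> N" "dp h y0 \<noteq> 0" by blast
  define y where "y = inverse (dp h y0) *s y0"
  have hy: "dp h y = 1" using y0 by (simp add: y_def dp_scale_right)
  have yN: "y \<notin> N" using sub_scale[OF assms(2), of "inverse (dp h y0)" y0] y0 by (auto simp: y_def)
  define a where "a = outer y h"
  have ai: "\<And>x. a *v (a *v x) = a *v x" unfolding a_def using outer_idem[OF hy] .
  have pw: "mpow a m *v v = a *v v" if "m \<ge> 1" for m v using mpow_idem[OF ai that] .
  have inJ: "\<forall>m\<ge>1. mpow a m \<in> colon N u"
  proof (intro allI impI)
    fix m :: nat assume m: "m \<ge> 1"
    have "mpow a m *v u = 0" using pw[OF m] by (simp add: a_def outer_mv hu)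
    then show "mpow a m \<in> colon N u" using assms(2) by (simp add: colon_def vec_subspace_def)
  qed
  define e where "e = axis k (inverse (u$k))"
  have eu: "dp e u = 1" using k by (simp add: e_def dp_axis_left)
  define c where "c = outer y e"
  have key: "mpow a m ** c \<notin> colon N u" if "m \<ge> 1" for m
  proof -
    have "(mpow a m ** c) *v u = mpow a m *v y"
      by (simp add: matrix_vector_mul_assoc[symmetric] c_def outer_mv eu)
    also have "\<dots> = y" using pw[OF that] by (simp add: a_def outer_mv hy)
    finally show ?thesis using yN by (simp add: colon_def)
  qed
  have "\<not> right_mathieu (colon N u)"
  proof
    assume "right_mathieu (colon N u)"
    then obtain N0 where "\<forall>m\<ge>N0. mpow a m ** c \<in> colon N u"
      using inJ unfolding right_mathieu_def by blast
    then show False using key[of "max N0 1"] by auto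
  qed
  moreover have "\<not> two_sided_mathieu (colon N u)"
  proof
    assume "two_sided_mathieu (colon N u)"
    then obtain N0 where "\<forall>m\<ge>N0. mat 1 ** mpow a m ** c \<in> colon N u"
      using inJ unfolding two_sided_mathieu_def by blast
    then show False using key[of "max N0 1"] by auto
  qed
  ultimately show ?thesis by blast
qed


lemma left_fail:
  fixes N :: "('a::field ^ 'n) set"
  assumes "vec_subspace N" "N \<noteq> UNIV" "N \<noteq> {0}" "u \<noteq> 0"
  shows "\<not> left_mathieu (colon N u)"
proof
  assume LM: "left_mathieu (colon N u)"
  obtain k where k: "u$k \<noteq> 0" using nonzero_coord[OF assms(4)] by blast
  have "0 \<in> N" using assms(1) by (simp add: vec_subspace_def)
  then obtain w where w: "w \<in> N" "w \<noteq> 0" using assms(3) by blast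
  obtain l where l: "w$l \<noteq> 0" using nonzero_coord[OF w(2)] by blast
  obtain v where v: "v \<notin> N" using assms(2) by blast
  have "\<exists>g. dp g u \<noteq> 0 \<and> dp g w \<noteq> 0"
  proof (cases "dp (axis k 1) w \<noteq> 0")
    case True then show ?thesis using k by (intro exI[of _ "axis k 1"]) (simp add: dp_axis_left)
  next
    case F1: False
    show ?thesis
    proof (cases "dp (axis l 1) u \<noteq> 0")
      case True then show ?thesis using l by (intro exI[of _ "axis l 1"]) (simp add: dp_axis_left)
    next
      case False
      then show ?thesis using F1 k l
        by (intro exI[of _ "axis k 1 + axis l 1"]) (simp add: dp_add_left dp_axis_left)
    qed
  qed
  then obtain g0 where g0: "dp g0 u \<noteq> 0" "dp g0 w \<noteq> 0" by blast
  define g where "g = inverse (dp g0 w) *s g0"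
  have gw: "dp g w = 1" using g0 by (simp add: g_def dp_scale_left)
  define s where "s = dp g u"
  have s: "s \<noteq> 0" using g0 by (simp add: s_def g_def dp_scale_left)
  define a where "a = outer w g"
  have ai: "\<And>x. a *v (a *v x) = a *v x" unfolding a_def using outer_idem[OF gw] .
  have pw: "mpow a m *v u = s *s w" if "m \<ge> 1" for m
    using mpow_idem[OF ai that] by (simp add: a_def outer_mv s_def)
  have inJ: "\<forall>m\<ge>1. mpow a m \<in> colon N u"
    using pw w(1) assms(1) by (simp add: colon_def vec_subspace_def)
  define e where "e = axis l (inverse (w$l))"
  have ew: "dp e w = 1" using l by (simp add: e_def dp_axis_left)
  define b where "b = outer v e"
  obtain N0 where N0: "\<forall>m\<ge>N0. b ** mpow a m \<in> colon N u"
    using LM inJ unfolding left_mathieu_def by blast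
  define m where "m = max N0 1"
  have "(b ** mpow a m) *v u = s *s v"
    using pw[of m] by (simp add: m_def matrix_vector_mul_assoc[symmetric] b_def outer_mv
        dp_scale_right ew)
  moreover have "b ** mpow a m \<in> colon N u" using N0 by (simp add: m_def)
  ultimately have "s *s v \<in> N" by (simp add: colon_def)
  then show False using sub_scale[OF assms(1) _ s] v by blast
qed

lemma ideal_mathieu: "is_ideal th J \<Longrightarrow> is_mathieu th J"
proof (cases th)
  case LeftT
  assume "is_ideal th J" then show ?thesis using LeftT
    by (auto simp: left_ideal_def left_mathieu_def)
next
  case RightT
  assume "is_ideal th J" then show ?thesis using RightT
    by (auto simp: right_ideal_def right_mathieu_def)
next
  case PreTwoSided
  assume "is_ideal th J" then show ?thesis using PreTwoSided
    by (auto simp: left_ideal_def left_mathieu_def right_ideal_def right_mathieu_def)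
      (rule exI[of _ 1]; auto)+
next
  case TwoSided
  assume "is_ideal th J" then show ?thesis using TwoSided
    by (auto simp: left_ideal_def two_sided_mathieu_def right_ideal_def)
      (rule exI[of _ 1]; auto)+
qed

lemma sigma_tau: "sigma_th th N \<subseteq> tau_th th N"
  using ideal_mathieu by (auto simp: sigma_th_def tau_th_def)

lemma univ_ideal: "is_ideal th (UNIV :: ('a::field^'n^'n) set)"
  by (cases th) (auto simp: left_ideal_def right_ideal_def mat_subspace_def)

lemma zero_sigma:
  assumes "vec_subspace N" shows "0 \<in> sigma_th th N"
proof -
  have "colon N 0 = UNIV" using assms by (auto simp: colon_def vec_subspace_def)
  then show ?thesis using univ_ideal by (simp add: sigma_th_def)
qed

lemma tau_zero:
  assumes "vec_subspace N" "\<And>u. u \<noteq> 0 \<Longrightarrow> \<not> is_mathieu th (colon N u)"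
  shows "sigma_th th N = {0} \<and> tau_th th N = {0}"
proof -
  have "tau_th th N \<subseteq> {0}" using assms(2) by (auto simp: tau_th_def)
  then show ?thesis using sigma_tau[of th N] zero_sigma[OF assms(1), of th] by auto
qed


theorem proposition5p1:
  fixes N :: "('a::field ^ 'n) set"
  assumes "CARD('n) \<ge> 2"
    and "vec_subspace N"
  shows "(N = UNIV \<longrightarrow> (\<forall>th. sigma_th th N = UNIV \<and> tau_th th N = UNIV))
    \<and> (N = {0} \<longrightarrow>
         (sigma_th LeftT N = UNIV \<and> tau_th LeftT N = UNIV)
       \<and> (\<forall>th. th \<noteq> LeftT \<longrightarrow> sigma_th th N = {0} \<and> tau_th th N = {0}))
    \<and> (N \<noteq> {0} \<and> N \<noteq> UNIV \<longrightarrow> (\<forall>th. sigma_th th N = {0} \<and> tau_th th N = {0}))"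
proof -
  have P1: "sigma_th th N = UNIV \<and> tau_th th N = UNIV" if NU: "N = UNIV" for th
  proof -
    have "colon N u = UNIV" for u using NU by (simp add: colon_def)
    then have "sigma_th th N = UNIV" using univ_ideal by (simp add: sigma_th_def)
    then show ?thesis using sigma_tau[of th N] by auto
  qed
  have P2: "sigma_th LeftT N = UNIV \<and> tau_th LeftT N = UNIV" if N0: "N = {0}"
  proof -
    have "left_ideal (colon N u)" for u
      using colon_subspace[OF assms(2), of u] N0
      by (simp add: left_ideal_def colon_def matrix_vector_mul_assoc[symmetric])
    then have "sigma_th LeftT N = UNIV" by (simp add: sigma_th_def)
    then show ?thesis using sigma_tau[of LeftT N] by auto
  qed
  have P3: "sigma_th th N = {0} \<and> tau_th th N = {0}" if N0: "N = {0}" and th: "th \<noteq> LeftT" for th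
  proof -
    have "N \<noteq> UNIV"
    proof
      assume "N = UNIV"
      then have "(axis undefined (1::'a) :: 'a^'n) \<in> N" by simp
      then have "(axis undefined (1::'a) :: 'a^'n) = 0" using N0 by blast
      then have "(axis undefined (1::'a) :: 'a^'n) $ undefined = 0" by (simp only: zero_index)
      then show False by (simp only: axis_nth one_neq_zero)
    qed
    have M: "\<not> is_mathieu th (colon N u)" if "u \<noteq> 0" for u
    proof -
      have R: "\<not> right_mathieu (colon N u) \<and> \<not> two_sided_mathieu (colon N u)"
        using right_fail[OF assms \<open>N \<noteq> UNIV\<close> that] .
      show ?thesis using th R by (cases th) simp_all
    qed
    show ?thesis using tau_zero[OF assms(2) M] .
  qed
  have P4: "sigma_th th N = {0} \<and> tau_th th N = {0}" if H: "N \<noteq> {0} \<and> N \<noteq> UNIV" for th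
  proof -
    have M: "\<not> is_mathieu th (colon N u)" if "u \<noteq> 0" for u
    proof -
      have R: "\<not> right_mathieu (colon N u) \<and> \<not> two_sided_mathieu (colon N u)"
        using right_fail[OF assms _ that] H by blast
      have L: "\<not> left_mathieu (colon N u)" using left_fail[OF assms(2) _ _ that] H by blast
      show ?thesis using L R by (cases th) simp_all
    qed
    show ?thesis using tau_zero[OF assms(2) M] .
  qed
  show ?thesis
    apply (intro conjI impI allI)
    using P1 P2 P3 P4 by simp_all
qed

end
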